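(* Let $(a_i)_{i\in\mathbb N}\subset\mathbb R_+$ be nonincreasing and let $b_i>0$ for $i\in\mathbb N$. Then for $0<p<1$ and every $k\in\mathbb N$, $\sum_{i=k+1}^\infty a_ib_i\le\Bigl(\sum_{i\in\mathbb N}a_i^pb_i\Bigr)^{1/p}\Bigl(\sum_{i=1}^k b_i\Bigr)^{1-\frac1p}.$ *)

theory Defs
  imports Complex_Main
begin

end

theory Submission
  imports Defs
begin

theorem lemma3p8:
  fixes a b :: "nat \<Rightarrow> real" and p :: real and k :: nat
  assumes a_nonneg: "\<And>i. i \<ge> 1 \<Longrightarrow> a i \<ge> 0"
    and a_noninc: "\<And>i j. 1 \<le> i \<Longrightarrow> i \<le> j \<Longrightarrow> a j \<le> a i"
    and b_pos: "\<And>i. i \<ge> 1 \<Longrightarrow> b i > 0"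
    and p: "0 < p" "p < 1"
    and k: "k \<ge> 1"
    and summ: "summable (\<lambda>n. a (n + 1) powr p * b (n + 1))"
  shows "summable (\<lambda>n. a (n + k + 1) * b (n + k + 1)) \<and>
         (\<Sum>n. a (n + k + 1) * b (n + k + 1))
           \<le> (\<Sum>n. a (n + 1) powr p * b (n + 1)) powr (1 / p)
              * (\<Sum>i = 1..k. b i) powr (1 - 1 / p)"
proof -
  define f where "f n = a (n + 1) powr p * b (n + 1)" for n
  define S where "S = suminf f"
  define B where "B = (\<Sum>i = 1..k. b i)"
  have fnn: "0 \<le> f n" for n unfolding f_def using b_pos[of "n+1"] by simp
  have sf: "summable f" using summ unfolding f_def by simp
  have S0: "0 \<le> S" unfolding S_def using sf fnn by (simp add: suminf_nonneg)
  have B0: "0 < B" unfolding B_def using k b_pos by (intro sum_pos) auto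
  have shift: "(\<Sum>i = 1..k. g i) = (\<Sum>n<k. g (n+1))" for g :: "nat \<Rightarrow> real"
    by (induction k) auto
  have part: "(\<Sum>i = 1..k. a i powr p * b i) \<le> S"
    unfolding shift S_def f_def[symmetric]
    using sf fnn by (intro sum_le_suminf) auto
  have abound: "a i powr p \<le> S / B" if "i > k" for i
  proof -
    have "a i powr p * B = (\<Sum>j = 1..k. a i powr p * b j)"
      unfolding B_def by (simp add: sum_distrib_left)
    also have "\<dots> \<le> (\<Sum>j = 1..k. a j powr p * b j)"
    proof (intro sum_mono mult_right_mono)
      fix j assume j: "j \<in> {1..k}"
      show "a i powr p \<le> a j powr p"
        using j that a_nonneg[of i] a_noninc[of j i] p by (intro powr_mono2) auto
      show "0 \<le> b j" using j b_pos[of j] by simp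
    qed
    also have "\<dots> \<le> S" by (rule part)
    finally show ?thesis using B0 by (simp add: pos_le_divide_eq)
  qed
  define C where "C = (S / B) powr ((1 - p) / p)"
  have C0: "0 \<le> C" unfolding C_def by simp
  have key: "a i * b i \<le> C * (a i powr p * b i)" if "i > k" for i
  proof -
    have ai: "0 \<le> a i" using a_nonneg[of i] that k by simp
    have bi: "0 < b i" using b_pos[of i] that k by simp
    show ?thesis
    proof (cases "a i = 0")
      case True then show ?thesis using C0 bi by simp
    next
      case False
      hence apos: "0 < a i" using ai by simp
      have "a i = a i powr p * a i powr (1 - p)"
        using apos by (simp add: powr_add[symmetric])
      moreover have "a i powr (1 - p) \<le> C"
      proof -
        have "a i powr (1 - p) = (a i powr p) powr ((1 - p) / p)"
          using p by (simp add: powr_powr)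
        also have "\<dots> \<le> C" unfolding C_def
          using abound[OF that] p by (intro powr_mono2) auto
        finally show ?thesis .
      qed
      ultimately have "a i \<le> a i powr p * C"
        by (metis mult_left_mono powr_ge_zero)
      then show ?thesis using bi by (simp add: mult_right_mono mult_ac)
    qed
  qed
  have sfk: "summable (\<lambda>n. f (n + k))" using sf by (rule summable_ignore_initial_segment)
  have sfkC: "summable (\<lambda>n. C * f (n + k))" using sfk by (rule summable_mult)
  have le: "norm (a (n + k + 1) * b (n + k + 1)) \<le> C * f (n + k)" for n
  proof -
    have "0 \<le> a (n + k + 1) * b (n + k + 1)"
      using a_nonneg[of "n+k+1"] b_pos[of "n+k+1"] by simp
    then show ?thesis using key[of "n+k+1"] unfolding f_def by (simp add: add.commute add.left_commute)
  qed
  have sumA: "summable (\<lambda>n. a (n + k + 1) * b (n + k + 1))"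
    by (rule summable_comparison_test[OF _ sfkC]) (use le in auto)
  have "(\<Sum>n. a (n + k + 1) * b (n + k + 1)) \<le> (\<Sum>n. C * f (n + k))"
    using le sumA sfkC by (intro suminf_le) (auto dest: abs_le_D1)
  also have "\<dots> = C * (\<Sum>n. f (n + k))" using sfk by (rule suminf_mult)
  also have "(\<Sum>n. f (n + k)) \<le> S"
  proof -
    have "S = (\<Sum>n. f (n + k)) + sum f {..<k}" unfolding S_def
      using sf by (rule suminf_split_initial_segment)
    moreover have "0 \<le> sum f {..<k}" using fnn by (simp add: sum_nonneg)
    ultimately show ?thesis by simp
  qed
  hence "C * (\<Sum>n. f (n + k)) \<le> C * S" using C0 by (rule mult_left_mono)
  also have "C * S = S powr (1 / p) * B powr (1 - 1 / p)"
  proof (cases "S = 0")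
    case True then show ?thesis by simp
  next
    case False
    hence Sp: "0 < S" using S0 by simp
    have "C * S = S powr ((1 - p) / p) * S / B powr ((1 - p) / p)"
      unfolding C_def using Sp B0 by (simp add: powr_divide)
    also have "S powr ((1 - p) / p) * S = S powr (1 / p)"
    proof -
      have "S powr ((1 - p) / p) * S = S powr ((1 - p) / p + 1)"
        using Sp by (simp add: powr_add)
      also have "(1 - p) / p + 1 = 1 / p" using p by (simp add: field_simps)
      finally show ?thesis .
    qed
    also have "1 / B powr ((1 - p) / p) = B powr (1 - 1 / p)"
    proof -
      have "1 - 1 / p = - ((1 - p) / p)" using p by (simp add: field_simps)
      then show ?thesis using B0 by (simp add: powr_minus divide_inverse)
    qed
    hence "S powr (1 / p) / B powr ((1 - p) / p) = S powr (1 / p) * B powr (1 - 1 / p)"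
      by (metis times_divide_eq_right mult.right_neutral)
    finally show ?thesis .
  qed
  finally show ?thesis using sumA unfolding S_def B_def f_def by simp
qed

end
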